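(* Let $\mathcal{L}$ be a lattice. If there is an infinite set $L\subseteq\mathcal{L}$ such that for all $\ell,\ell'\in L$, $\ell\sqsubseteq\ell'$ implies $\ell=\ell'$, then the exponential lattice $2^{\mathcal{L}}$ is $\Theta(2^n)$.
   Context: A lattice means a partially ordered set $(\mathcal{L},\sqsubseteq)$ with least element $\bot$ in which any two elements have a least upper bound $\sqcup$; $\bigsqcup S$ denotes the least upper bound of a finite set ($\bigsqcup\emptyset=\bot$). The exponential lattice $2^{\mathcal{L}}$ has as elements subsets of $\mathcal{L}$, preordered by $\ell\sqsubseteq\ell'$ iff for every $\jmath\in\ell$ there is $\jmath'\in\ell'$ with $\jmath\sqsubseteq\jmath'$, and quotiented by the equivalence $\ell\sim\ell'$ iff $\ell\sqsubseteq\ell'$ and $\ell'\sqsubseteq\ell$ (so the order is antisymmetric). The closure set of a finite $S$ is $C(S)=\{\bigsqcup S' : S'\subseteq S\}$, $CS_{\mathcal{L}}(n)=\max\{|C(S)| : S\subseteq\mathcal{L}\text{ finite}, |S|\le n\}$. For $f,g:\mathbb{N}\to\mathbb{N}$, $f$ is $O(g)$ (resp. $\Omega(g)$) iff there exist $N_0\in\mathbb{N}$ and rational $C>0$ with $f(n)\le Cg(n)$ (resp. $\ge$) for all $n\ge N_0$; $\Theta$ means both. A lattice is $\Theta(f(n))$ iff its $CS$ is. *)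

theory Defs
  imports Main "HOL-Library.Landau_Symbols"
begin

text \<open>Lattices in the sense of the paper: partial orders with least element in which any
  two elements have a least upper bound, i.e. the class bounded_semilattice_sup_bot.\<close>

definition fsup :: "'a::bounded_semilattice_sup_bot set \<Rightarrow> 'a" where
  "fsup S = Finite_Set.fold sup bot S"

definition closure_set :: "'a::bounded_semilattice_sup_bot set \<Rightarrow> 'a set" where
  "closure_set S = {fsup S' | S'. S' \<subseteq> S}"

definition CS :: "'a::bounded_semilattice_sup_bot itself \<Rightarrow> nat \<Rightarrow> nat" where
  "CS _ n = Max {card (closure_set (S :: 'a set)) | S. finite S \<and> card S \<le> n}"

text \<open>The exponential lattice: subsets of the base lattice, preordered by domination,
  quotiented by mutual domination.\<close>
definition exp_le :: "'a::order set \<Rightarrow> 'a set \<Rightarrow> bool" where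
  "exp_le A B \<longleftrightarrow> (\<forall>x\<in>A. \<exists>y\<in>B. x \<le> y)"

definition exp_eq :: "'a::order set \<Rightarrow> 'a set \<Rightarrow> bool" where
  "exp_eq A B \<longleftrightarrow> exp_le A B \<and> exp_le B A"

lemma exp_le_refl: "exp_le A A"
  unfolding exp_le_def by auto

lemma exp_le_trans: "exp_le A B \<Longrightarrow> exp_le B C \<Longrightarrow> exp_le A C"
  unfolding exp_le_def by (meson order_trans)

lemma equivp_exp_eq: "equivp exp_eq"
  by (rule equivpI) (auto simp: reflp_def symp_def transp_def exp_eq_def
      intro: exp_le_refl exp_le_trans)

quotient_type (overloaded) 'a explat = "'a::order set" / exp_eq
  morphisms rep_explat abs_explat
  by (rule equivp_exp_eq)

instantiation explat :: (order) bounded_semilattice_sup_bot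
begin

lift_definition less_eq_explat :: "'a explat \<Rightarrow> 'a explat \<Rightarrow> bool" is exp_le
  unfolding exp_eq_def by (meson exp_le_trans)

definition less_explat :: "'a explat \<Rightarrow> 'a explat \<Rightarrow> bool" where
  "less_explat x y \<longleftrightarrow> x \<le> y \<and> \<not> y \<le> x"

lift_definition sup_explat :: "'a explat \<Rightarrow> 'a explat \<Rightarrow> 'a explat" is "(\<union>)"
  unfolding exp_eq_def exp_le_def by blast

lift_definition bot_explat :: "'a explat" is "{}" .

instance
proof
  fix x y z :: "'a explat"
  show "(x < y) = (x \<le> y \<and> \<not> y \<le> x)" by (simp add: less_explat_def)
  show "x \<le> x" by transfer (rule exp_le_refl)
  show "x \<le> y \<Longrightarrow> y \<le> z \<Longrightarrow> x \<le> z" by transfer (rule exp_le_trans)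
  show "x \<le> y \<Longrightarrow> y \<le> x \<Longrightarrow> x = y" by transfer (simp add: exp_eq_def)
  show "x \<le> sup x y" by transfer (auto simp: exp_le_def)
  show "y \<le> sup x y" by transfer (auto simp: exp_le_def)
  show "y \<le> x \<Longrightarrow> z \<le> x \<Longrightarrow> sup y z \<le> x" by transfer (auto simp: exp_le_def)
  show "bot \<le> x" by transfer (simp add: exp_le_def)
qed

end

end

theory Submission
  imports Defs
begin

lemma fsup_insert:
  fixes S :: "'a::bounded_semilattice_sup_bot set"
  assumes "finite S"
  shows "fsup (insert x S) = sup x (fsup S)"
proof -
  interpret comp_fun_idem "sup :: 'a \<Rightarrow> 'a \<Rightarrow> 'a" by (fact comp_fun_idem_sup)
  show ?thesis unfolding fsup_def using assms by (simp add: fold_insert_idem)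
qed

lemma fsup_empty: "fsup {} = bot"
  unfolding fsup_def by simp

lemma fsup_single_img:
  fixes T :: "'b::order set"
  assumes "finite T"
  shows "fsup ((\<lambda>l. abs_explat {l}) ` T) = abs_explat T"
  using assms
proof (induction T rule: finite_induct)
  case empty
  then show ?case by (simp add: fsup_empty bot_explat_def)
next
  case (insert x F)
  have "fsup ((\<lambda>l. abs_explat {l}) ` insert x F) = sup (abs_explat {x}) (abs_explat F)"
    using insert by (simp add: fsup_insert)
  also have "\<dots> = abs_explat ({x} \<union> F)" by (simp add: sup_explat.abs_eq)
  finally show ?case by simp
qed

lemma card_cl_le:
  fixes S :: "'a::bounded_semilattice_sup_bot set"
  assumes that: "finite S" "card S \<le> n"
  shows "card (closure_set S) \<le> 2 ^ n"
  proof -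
    have "closure_set S = fsup ` Pow S" unfolding closure_set_def by auto
    then have "card (closure_set S) \<le> card (Pow S)" by (simp add: card_image_le that)
    also have "\<dots> = 2 ^ card S" using that by (simp add: card_Pow)
    also have "\<dots> \<le> 2 ^ n" using that by simp
    finally show ?thesis .
  qed

lemma CS_fin: "finite {card (closure_set (S :: 'a::bounded_semilattice_sup_bot set)) | S. finite S \<and> card S \<le> n}"
    by (rule finite_subset[of _ "{..2^n}"]) (auto dest: card_cl_le)

lemma CS_upper:
  "CS TYPE('a::bounded_semilattice_sup_bot) n \<le> 2 ^ n"
proof -
  note bnd = card_cl_le
  let ?M = "{card (closure_set (S :: 'a set)) | S. finite S \<and> card S \<le> n}"
  have fin: "finite ?M"
    by (rule finite_subset[of _ "{..2^n}"]) (auto dest: bnd)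
  have ne: "?M \<noteq> {}" by auto
  show ?thesis unfolding CS_def using fin ne bnd by (subst Max_le_iff) auto
qed

lemma CS_lower:
  fixes L :: "'a::bounded_semilattice_sup_bot set"
  assumes "infinite L"
    and anti: "\<forall>l\<in>L. \<forall>l'\<in>L. l \<le> l' \<longrightarrow> l = l'"
  shows "2 ^ n \<le> CS TYPE('a explat) n"
proof -
  obtain A where A: "A \<subseteq> L" "finite A" "card A = n"
    using infinite_arbitrarily_large[OF assms(1)] by blast
  define f where "f = (\<lambda>l::'a. abs_explat {l})"
  define S where "S = f ` A"
  have injf: "inj_on abs_explat (Pow A)"
  proof (rule inj_onI)
    fix T1 T2 assume T: "T1 \<in> Pow A" "T2 \<in> Pow A" "abs_explat T1 = (abs_explat T2 :: 'a explat)"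
    then have "exp_eq T1 T2" by (simp add: explat.abs_eq_iff)
    then have "exp_le T1 T2" "exp_le T2 T1" by (auto simp: exp_eq_def)
    then show "T1 = T2" using T(1,2) A(1) anti unfolding exp_le_def by blast
  qed
  have inj1: "inj_on f A"
  proof (rule inj_onI)
    fix x y assume "x \<in> A" "y \<in> A" "f x = f y"
    then have "abs_explat {x} = (abs_explat {y} :: 'a explat)" by (simp add: f_def)
    with injf \<open>x \<in> A\<close> \<open>y \<in> A\<close> have "{x} = {y}" by (auto dest: inj_onD)
    then show "x = y" by simp
  qed
  have cardS: "card S = n" using A inj1 by (simp add: S_def card_image)
  have finS: "finite S" using A by (simp add: S_def)
  have cl: "closure_set S = abs_explat ` Pow A"
  proof
    show "closure_set S \<subseteq> abs_explat ` Pow A"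
    proof
      fix z assume "z \<in> closure_set S"
      then obtain S' where "S' \<subseteq> S" "z = fsup S'" unfolding closure_set_def by auto
      then obtain T where "T \<subseteq> A" "S' = f ` T" unfolding S_def by (auto simp: subset_image_iff)
      moreover have "finite T" using \<open>T \<subseteq> A\<close> A(2) finite_subset by blast
      ultimately show "z \<in> abs_explat ` Pow A" using \<open>z = fsup S'\<close>
        by (auto simp: f_def fsup_single_img)
    qed
  next
    show "abs_explat ` Pow A \<subseteq> closure_set S"
    proof
      fix z assume "z \<in> abs_explat ` Pow A"
      then obtain T where T: "T \<subseteq> A" "z = abs_explat T" by auto
      have "finite T" using T A(2) finite_subset by blast
      then have "z = fsup (f ` T)" using T by (simp add: f_def fsup_single_img)
      moreover have "f ` T \<subseteq> S" using T by (auto simp: S_def)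
      ultimately show "z \<in> closure_set S" unfolding closure_set_def by auto
    qed
  qed
  have "card (closure_set S) = 2 ^ n"
    using cl injf A by (simp add: card_image card_Pow)
  then show ?thesis unfolding CS_def using CS_fin finS cardS
    by (intro Max_ge) (auto intro!: exI[of _ S])
qed

theorem mainTheorem6:
  fixes L :: "'a::bounded_semilattice_sup_bot set"
  assumes "infinite L"
    and "\<forall>l\<in>L. \<forall>l'\<in>L. l \<le> l' \<longrightarrow> l = l'"
  shows "(\<lambda>n. real (CS TYPE('a explat) n)) \<in> \<Theta>(\<lambda>n. 2 ^ n)"
proof -
  have "(\<lambda>n. real (CS TYPE('a explat) n)) = (\<lambda>n. 2 ^ n)"
  proof
    fix n
    have "CS TYPE('a explat) n = 2 ^ n"
      using CS_upper[where 'a="'a explat"] CS_lower[OF assms] by (intro antisym) auto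
    then show "real (CS TYPE('a explat) n) = 2 ^ n" by simp
  qed
  then show ?thesis by simp
qed

end
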